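(* Let $\mathcal A^{\times}=\mathcal D_x\otimes\mathcal D_y-\mathcal G_x\otimes\mathcal G_y$ be the two-dimensional collocation matrix for the multiplicative kernel (see context). Then $\mathcal A^{\times}$ is strictly diagonally dominant by rows.
   Context: Fix $\gamma\in(0,1)$. For an interval $[\alpha,\beta]$ and an integer $m\ge2$ let $h=(\beta-\alpha)/m$, $x_s=\alpha+sh$ ($s\in\{0,\tfrac12,\dots,m\}$), and let $\phi_{s}$ be the piecewise quadratic Lagrange basis: for integers $0\le l\le m$, $\phi_l(x)=\frac{x-x_{l-1}}{h}\cdot\frac{2x-(x_l+x_{l-1})}{h}$ on $[x_{l-1},x_l]\cap[\alpha,\beta]$, $\phi_l(x)=\frac{x_{l+1}-x}{h}\cdot\frac{(x_{l+1}+x_l)-2x}{h}$ on $[x_l,x_{l+1}]\cap[\alpha,\beta]$, $0$ otherwise; for $l=1,\dots,m$, $\phi_{l-\frac12}(x)=\frac{4(x-x_{l-1})(x_l-x)}{h^2}$ on $[x_{l-1},x_l]$, $0$ otherwise. The associated 1D matrices are $\mathcal D=\mathrm{diag}(d_1,\dots,d_{2m-1})$ and $\mathcal G=(g_{ij})_{i,j=1}^{2m-1}$ with $d_i=\int_\alpha^\beta|x_{i/2}-y|^{-\gamma}dy$ and $g_{ij}=\int_\alpha^\beta\phi_{j/2}(y)|x_{i/2}-y|^{-\gamma}dy$. The following fact, established in earlier work, may be used: all $g_{ij}>0$ and $\mathcal D-\mathcal G$ is strictly diagonally dominant by rows. For $a<b$, $c<d$, $M_x,M_y\ge2$: $\mathcal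 D_x,\mathcal G_x$ are these matrices for $[a,b]$, $m=M_x$, and $\mathcal D_y,\mathcal G_y$ for $[c,d]$, $m=M_y$. Then $\mathcal A^{\times}=\mathcal D_x\otimes\mathcal D_y-\mathcal G_x\otimes\mathcal G_y$, which is the collocation matrix of $u\mapsto\int_\Omega\frac{u(x,y)-u(\bar x,\bar y)}{|x-\bar x|^\gamma|y-\bar y|^\gamma}d\bar xd\bar y$ on $\Omega=(a,b)\times(c,d)$ with tensor-product piecewise quadratic interpolation, rows/columns indexed by pairs $(i,j)\in\{1,\dots,2M_x-1\}\times\{1,\dots,2M_y-1\}$. *)

theory Defs
  imports "HOL-Analysis.Analysis"
begin

(* mesh size h = (beta - alpha)/m and nodes x_s = alpha + s*h, s real (s in {0,1/2,...,m}) *)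
definition mesh :: "real \<Rightarrow> real \<Rightarrow> nat \<Rightarrow> real" where
  "mesh \<alpha> \<beta> m = (\<beta> - \<alpha>) / real m"

definition node :: "real \<Rightarrow> real \<Rightarrow> nat \<Rightarrow> real \<Rightarrow> real" where
  "node \<alpha> \<beta> m s = \<alpha> + s * mesh \<alpha> \<beta> m"

definition phi_int :: "real \<Rightarrow> real \<Rightarrow> nat \<Rightarrow> nat \<Rightarrow> real \<Rightarrow> real" where
  "phi_int \<alpha> \<beta> m l x =
    (let h = mesh \<alpha> \<beta> m; xl = node \<alpha> \<beta> m (real l);
         xm = node \<alpha> \<beta> m (real l - 1); xp = node \<alpha> \<beta> m (real l + 1) in
     if x \<in> {xm..xl} \<inter> {\<alpha>..\<beta>} then ((x - xm) / h) * ((2*x - (xl + xm)) / h)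
     else if x \<in> {xl..xp} \<inter> {\<alpha>..\<beta>} then ((xp - x) / h) * (((xp + xl) - 2*x) / h)
     else 0)"

(* half-integer-indexed basis function phi_{l-1/2}, l = 1..m *)
definition phi_half :: "real \<Rightarrow> real \<Rightarrow> nat \<Rightarrow> nat \<Rightarrow> real \<Rightarrow> real" where
  "phi_half \<alpha> \<beta> m l x =
    (let h = mesh \<alpha> \<beta> m; xl = node \<alpha> \<beta> m (real l);
         xm = node \<alpha> \<beta> m (real l - 1) in
     if x \<in> {xm..xl} then 4 * (x - xm) * (xl - x) / h^2 else 0)"

(* phi_{j/2}: j even gives phi_{j div 2}, j odd gives phi_{(j+1)/2 - 1/2} *)
definition phi :: "real \<Rightarrow> real \<Rightarrow> nat \<Rightarrow> nat \<Rightarrow> real \<Rightarrow> real" where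
  "phi \<alpha> \<beta> m j = (if even j then phi_int \<alpha> \<beta> m (j div 2) else phi_half \<alpha> \<beta> m ((j + 1) div 2))"

definition dval :: "real \<Rightarrow> real \<Rightarrow> real \<Rightarrow> nat \<Rightarrow> nat \<Rightarrow> real" where
  "dval \<gamma> \<alpha> \<beta> m i =
     integral {\<alpha>..\<beta>} (\<lambda>y. \<bar>node \<alpha> \<beta> m (real i / 2) - y\<bar> powr (-\<gamma>))"

definition Dmat :: "real \<Rightarrow> real \<Rightarrow> real \<Rightarrow> nat \<Rightarrow> nat \<Rightarrow> nat \<Rightarrow> real" where
  "Dmat \<gamma> \<alpha> \<beta> m i j = (if i = j then dval \<gamma> \<alpha> \<beta> m i else 0)"

definition Gmat :: "real \<Rightarrow> real \<Rightarrow> real \<Rightarrow> nat \<Rightarrow> nat \<Rightarrow> nat \<Rightarrow> real" where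
  "Gmat \<gamma> \<alpha> \<beta> m i j =
     integral {\<alpha>..\<beta>} (\<lambda>y. phi \<alpha> \<beta> m j y * \<bar>node \<alpha> \<beta> m (real i / 2) - y\<bar> powr (-\<gamma>))"

definition sdd_rows :: "'i set \<Rightarrow> ('i \<Rightarrow> 'i \<Rightarrow> real) \<Rightarrow> bool" where
  "sdd_rows I A \<longleftrightarrow> (\<forall>p\<in>I. (\<Sum>q\<in>I - {p}. \<bar>A p q\<bar>) < \<bar>A p p\<bar>)"

definition idx :: "nat \<Rightarrow> nat set" where
  "idx m = {1..2*m - 1}"

(* A^x = D_x (x) D_y - G_x (x) G_y, rows/columns indexed by pairs (i,j) *)
definition Amult :: "real \<Rightarrow> real \<Rightarrow> real \<Rightarrow> real \<Rightarrow> real \<Rightarrow> nat \<Rightarrow> nat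
    \<Rightarrow> nat \<times> nat \<Rightarrow> nat \<times> nat \<Rightarrow> real" where
  "Amult \<gamma> a b c d Mx My p q =
     Dmat \<gamma> a b Mx (fst p) (fst q) * Dmat \<gamma> c d My (snd p) (snd q)
     - Gmat \<gamma> a b Mx (fst p) (fst q) * Gmat \<gamma> c d My (snd p) (snd q)"

end

theory Submission
  imports Defs
begin

lemma aux1: "0 \<le> (t::real) \<Longrightarrow> t \<le> 1 \<Longrightarrow> t * (2*t - 1) \<le> 1"
  by (smt (verit) mult_le_one mult_nonneg_nonpos)

lemma phi_int_le1:
  assumes "\<alpha> < \<beta>" "0 < m"
  shows "phi_int \<alpha> \<beta> m l y \<le> 1"
proof -
  define h where "h = mesh \<alpha> \<beta> m"
  have h: "h > 0" using assms by (simp add: h_def mesh_def)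
  have n: "\<And>s. node \<alpha> \<beta> m s = \<alpha> + s * h" by (simp add: node_def h_def)
  define xl where "xl = \<alpha> + real l * h"
  have A: "(y - (xl - h)) / h * ((2*y - (xl + (xl - h))) / h) = ((y - (xl - h)) / h) * (2 * ((y - (xl - h)) / h) - 1)"
    using h by (simp add: field_simps)
  have B: "((xl + h) - y) / h * (((xl + h) + xl - 2*y) / h) = (((xl + h) - y) / h) * (2 * (((xl + h) - y) / h) - 1)"
    using h by (simp add: field_simps)
  have e1: "\<alpha> + (real l - 1) * h = xl - h" "\<alpha> + (real l + 1) * h = xl + h"
    by (simp_all add: xl_def algebra_simps)
  have c1: "(y - (xl - h)) / h * ((2*y - (xl + (xl - h))) / h) \<le> 1"
    if "y \<in> {xl - h..xl} \<inter> {\<alpha>..\<beta>}"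
  proof -
    from that have y: "xl - h \<le> y" "y \<le> xl" by auto
    have "0 \<le> (y - (xl - h)) / h" using h y by simp
    moreover have "(y - (xl - h)) / h \<le> 1" using h y by (simp add: divide_le_eq)
    ultimately show ?thesis unfolding A by (rule aux1)
  qed
  have c2: "((xl + h) - y) / h * (((xl + h) + xl - 2*y) / h) \<le> 1"
    if "y \<in> {xl..xl+h} \<inter> {\<alpha>..\<beta>}"
  proof -
    from that have y: "xl \<le> y" "y \<le> xl + h" by auto
    have "0 \<le> (xl + h - y) / h" using h y by simp
    moreover have "(xl + h - y) / h \<le> 1" using h y by (simp add: divide_le_eq)
    ultimately show ?thesis unfolding B by (rule aux1)
  qed
  show ?thesis
    unfolding phi_int_def Let_def n h_def[symmetric] e1 xl_def[symmetric]
    apply (split if_split, intro conjI impI, erule c1)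
    apply (split if_split, intro conjI impI, erule c2)
    apply simp
    done
qed

lemma phi_half_le1:
  assumes "\<alpha> < \<beta>" "0 < m"
  shows "phi_half \<alpha> \<beta> m l y \<le> 1"
proof -
  define h where "h = mesh \<alpha> \<beta> m"
  have h: "h > 0" using assms by (simp add: h_def mesh_def)
  have n: "\<And>s. node \<alpha> \<beta> m s = \<alpha> + s * h" by (simp add: node_def h_def)
  have "4 * (y - (\<alpha> + (real l - 1) * h)) * (\<alpha> + real l * h - y) \<le> h^2"
  proof -
    have "4 * (y - (\<alpha> + (real l - 1) * h)) * (\<alpha> + real l * h - y) = h^2 - (2*y - 2*\<alpha> - (2*real l - 1)*h)^2"
      by (simp add: power2_eq_square algebra_simps)
    then show ?thesis by simp
  qed
  then show ?thesis unfolding phi_half_def Let_def n h_def[symmetric]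
    using h by (auto simp: field_simps)
qed

lemma phi_le1: "\<alpha> < \<beta> \<Longrightarrow> 0 < m \<Longrightarrow> phi \<alpha> \<beta> m j y \<le> 1"
  by (simp add: phi_def phi_int_le1 phi_half_le1)

lemma w_int:
  fixes x0 \<alpha> \<beta> \<gamma> :: real
  assumes "\<alpha> \<le> x0" "x0 \<le> \<beta>" "0 < \<gamma>" "\<gamma> < 1"
  shows "(\<lambda>y. \<bar>x0 - y\<bar> powr (-\<gamma>)) integrable_on {\<alpha>..\<beta>}"
proof (rule Henstock_Kurzweil_Integration.integrable_combine[where c=x0])
  show "\<alpha> \<le> x0" "x0 \<le> \<beta>" using assms by auto
  have f1: "(\<lambda>t. t powr (-\<gamma>)) integrable_on cbox 0 (x0 - \<alpha>)"
    using integrable_on_powr_from_0[of "-\<gamma>" "x0 - \<alpha>"] assms by simp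
  from integrable_affinity[OF f1, of "-1" x0]
  have "(\<lambda>y. (- y + x0) powr (-\<gamma>)) integrable_on {\<alpha>..x0}"
    using assms by simp
  then show "(\<lambda>y. \<bar>x0 - y\<bar> powr (-\<gamma>)) integrable_on {\<alpha>..x0}"
    by (rule integrable_eq) auto
  have f2: "(\<lambda>t. t powr (-\<gamma>)) integrable_on cbox 0 (\<beta> - x0)"
    using integrable_on_powr_from_0[of "-\<gamma>" "\<beta> - x0"] assms by simp
  from integrable_affinity[OF f2, of 1 "-x0"]
  have "(\<lambda>y. (y - x0) powr (-\<gamma>)) integrable_on {x0..\<beta>}"
    using assms by simp
  then show "(\<lambda>y. \<bar>x0 - y\<bar> powr (-\<gamma>)) integrable_on {x0..\<beta>}"
    by (rule integrable_eq) auto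
qed


lemma one_d:
  assumes "0 < \<gamma>" "\<gamma> < 1" "\<alpha> < \<beta>" "2 \<le> m"
    and gpos: "\<forall>i\<in>idx m. \<forall>j\<in>idx m. 0 < Gmat \<gamma> \<alpha> \<beta> m i j"
    and sdd: "sdd_rows (idx m) (\<lambda>i j. Dmat \<gamma> \<alpha> \<beta> m i j - Gmat \<gamma> \<alpha> \<beta> m i j)"
    and i: "i \<in> idx m"
  shows "(\<Sum>k\<in>idx m. Gmat \<gamma> \<alpha> \<beta> m i k) < dval \<gamma> \<alpha> \<beta> m i"
proof -
  define x0 where "x0 = node \<alpha> \<beta> m (real i / 2)"
  have i1: "1 \<le> i" "i \<le> 2*m - 1" using i by (auto simp: idx_def)
  have ri: "real i \<le> 2 * real m" using i1 assms(4) by linarith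
  have x0a: "\<alpha> \<le> x0" using assms(3,4) by (simp add: x0_def node_def mesh_def)
  have "real i / 2 * ((\<beta> - \<alpha>) / real m) \<le> real m * ((\<beta> - \<alpha>) / real m)"
    using ri assms(3) by (intro mult_right_mono) auto
  then have x0b: "x0 \<le> \<beta>" using assms(3,4) by (simp add: x0_def node_def mesh_def)
  define w where "w = (\<lambda>y. \<bar>x0 - y\<bar> powr (-\<gamma>))"
  have wi: "w integrable_on {\<alpha>..\<beta>}" unfolding w_def by (rule w_int[OF x0a x0b assms(1,2)])
  have gii: "0 < Gmat \<gamma> \<alpha> \<beta> m i i" using gpos i by blast
  have pwi: "(\<lambda>y. phi \<alpha> \<beta> m i y * w y) integrable_on {\<alpha>..\<beta>}"
  proof (rule ccontr)
    assume "\<not> ?thesis"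
    then have "Gmat \<gamma> \<alpha> \<beta> m i i = 0"
      unfolding Gmat_def w_def x0_def by (rule not_integrable_integral)
    with gii show False by simp
  qed
  have le: "Gmat \<gamma> \<alpha> \<beta> m i i \<le> dval \<gamma> \<alpha> \<beta> m i"
  proof -
    have "integral {\<alpha>..\<beta>} (\<lambda>y. phi \<alpha> \<beta> m i y * w y) \<le> integral {\<alpha>..\<beta>} w"
    proof (rule integral_le[OF pwi wi])
      fix y
      have "phi \<alpha> \<beta> m i y \<le> 1" using assms(3,4) by (intro phi_le1) auto
      moreover have "0 \<le> w y" by (simp add: w_def)
      ultimately show "phi \<alpha> \<beta> m i y * w y \<le> w y"
        by (metis mult.commute mult_left_le)
    qed
    then show ?thesis unfolding Gmat_def dval_def w_def x0_def .
  qed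
  have s: "(\<Sum>k\<in>idx m - {i}. \<bar>Dmat \<gamma> \<alpha> \<beta> m i k - Gmat \<gamma> \<alpha> \<beta> m i k\<bar>)
      < \<bar>Dmat \<gamma> \<alpha> \<beta> m i i - Gmat \<gamma> \<alpha> \<beta> m i i\<bar>"
    using sdd i unfolding sdd_rows_def by blast
  have eq: "(\<Sum>k\<in>idx m - {i}. \<bar>Dmat \<gamma> \<alpha> \<beta> m i k - Gmat \<gamma> \<alpha> \<beta> m i k\<bar>)
      = (\<Sum>k\<in>idx m - {i}. Gmat \<gamma> \<alpha> \<beta> m i k)"
  proof (rule sum.cong)
    fix k assume "k \<in> idx m - {i}"
    then show "\<bar>Dmat \<gamma> \<alpha> \<beta> m i k - Gmat \<gamma> \<alpha> \<beta> m i k\<bar> = Gmat \<gamma> \<alpha> \<beta> m i k"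
      using gpos i by (auto simp: Dmat_def less_imp_le)
  qed simp
  have nn: "0 \<le> (\<Sum>k\<in>idx m - {i}. Gmat \<gamma> \<alpha> \<beta> m i k)"
    using gpos i by (intro sum_nonneg) (auto simp: less_imp_le)
  have fin: "finite (idx m)" by (simp add: idx_def)
  have "(\<Sum>k\<in>idx m. Gmat \<gamma> \<alpha> \<beta> m i k) = Gmat \<gamma> \<alpha> \<beta> m i i + (\<Sum>k\<in>idx m - {i}. Gmat \<gamma> \<alpha> \<beta> m i k)"
    using sum.remove[OF fin i] by simp
  then show ?thesis using s eq nn le by (simp add: Dmat_def)
qed

theorem lemma3p8:
  fixes \<gamma> a b c d :: real and Mx My :: nat
  assumes "0 < \<gamma>" "\<gamma> < 1" "a < b" "c < d" "2 \<le> Mx" "2 \<le> My"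
    and gx_pos: "\<forall>i\<in>idx Mx. \<forall>j\<in>idx Mx. 0 < Gmat \<gamma> a b Mx i j"
    and gy_pos: "\<forall>i\<in>idx My. \<forall>j\<in>idx My. 0 < Gmat \<gamma> c d My i j"
    and sdd_x: "sdd_rows (idx Mx) (\<lambda>i j. Dmat \<gamma> a b Mx i j - Gmat \<gamma> a b Mx i j)"
    and sdd_y: "sdd_rows (idx My) (\<lambda>i j. Dmat \<gamma> c d My i j - Gmat \<gamma> c d My i j)"
  shows "sdd_rows (idx Mx \<times> idx My) (Amult \<gamma> a b c d Mx My)"
  unfolding sdd_rows_def
proof
  fix p assume p: "p \<in> idx Mx \<times> idx My"
  obtain i j where pij: "p = (i, j)" by (cases p)
  have i: "i \<in> idx Mx" and j: "j \<in> idx My" using p pij by auto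
  define I where "I = idx Mx"
  define J where "J = idx My"
  define gx where "gx = Gmat \<gamma> a b Mx i"
  define gy where "gy = Gmat \<gamma> c d My j"
  define dx where "dx = dval \<gamma> a b Mx i"
  define dy where "dy = dval \<gamma> c d My j"
  have Sx: "(\<Sum>k\<in>I. gx k) < dx"
    unfolding I_def gx_def dx_def by (rule one_d[OF assms(1,2,3,5) gx_pos sdd_x i])
  have Sy: "(\<Sum>k\<in>J. gy k) < dy"
    unfolding J_def gy_def dy_def by (rule one_d[OF assms(1,2,4,6) gy_pos sdd_y j])
  have gxp: "\<And>k. k \<in> I \<Longrightarrow> 0 < gx k" using gx_pos i by (simp add: I_def gx_def)
  have gyp: "\<And>k. k \<in> J \<Longrightarrow> 0 < gy k" using gy_pos j by (simp add: J_def gy_def)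
  have iI: "i \<in> I" and jJ: "j \<in> J" using i j by (simp_all add: I_def J_def)
  have fin: "finite (I \<times> J)" by (simp add: I_def J_def idx_def)
  have Sxn: "0 \<le> (\<Sum>k\<in>I. gx k)" using gxp by (intro sum_nonneg) (auto simp: less_imp_le)
  have Syn: "0 \<le> (\<Sum>k\<in>J. gy k)" using gyp by (intro sum_nonneg) (auto simp: less_imp_le)
  have diag: "Amult \<gamma> a b c d Mx My p p = dx * dy - gx i * gy j"
    by (simp add: pij Amult_def Dmat_def dx_def dy_def gx_def gy_def)
  have off: "\<And>q. q \<in> I \<times> J - {p} \<Longrightarrow> \<bar>Amult \<gamma> a b c d Mx My p q\<bar> = gx (fst q) * gy (snd q)"
  proof -
    fix q assume q: "q \<in> I \<times> J - {p}"
    then have "fst q \<noteq> i \<or> snd q \<noteq> j" using pij by (cases q) auto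
    then have "Amult \<gamma> a b c d Mx My p q = - (gx (fst q) * gy (snd q))"
      by (auto simp: pij Amult_def Dmat_def gx_def gy_def)
    moreover have "0 < gx (fst q) * gy (snd q)" using q gxp gyp by (cases q) auto
    ultimately show "\<bar>Amult \<gamma> a b c d Mx My p q\<bar> = gx (fst q) * gy (snd q)" by simp
  qed
  have "(\<Sum>q\<in>I \<times> J - {p}. \<bar>Amult \<gamma> a b c d Mx My p q\<bar>) = (\<Sum>q\<in>I \<times> J - {p}. gx (fst q) * gy (snd q))"
    using off by (rule sum.cong[OF refl])
  also have "\<dots> = (\<Sum>q\<in>I \<times> J. gx (fst q) * gy (snd q)) - gx i * gy j"
    using sum_diff1[OF fin, of "\<lambda>q. gx (fst q) * gy (snd q)" p] p pij
    by (simp add: I_def J_def)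
  also have "(\<Sum>q\<in>I \<times> J. gx (fst q) * gy (snd q)) = (\<Sum>k\<in>I. gx k) * (\<Sum>l\<in>J. gy l)"
    by (simp add: sum_product sum.cartesian_product split_def)
  finally have offs: "(\<Sum>q\<in>I \<times> J - {p}. \<bar>Amult \<gamma> a b c d Mx My p q\<bar>) = (\<Sum>k\<in>I. gx k) * (\<Sum>l\<in>J. gy l) - gx i * gy j" .
  have "(\<Sum>k\<in>I. gx k) * (\<Sum>l\<in>J. gy l) < dx * dy"
    using Sx Sy Sxn Syn by (meson less_le_trans mult_strict_mono' order.strict_implies_order) 
  then have "(\<Sum>q\<in>I \<times> J - {p}. \<bar>Amult \<gamma> a b c d Mx My p q\<bar>) < \<bar>Amult \<gamma> a b c d Mx My p p\<bar>"
    using offs diag by linarith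
  then show "(\<Sum>q\<in>idx Mx \<times> idx My - {p}. \<bar>Amult \<gamma> a b c d Mx My p q\<bar>) < \<bar>Amult \<gamma> a b c d Mx My p p\<bar>"
    by (simp add: I_def J_def)
qed

end
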